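(* Let $G$ be a graph containing a triangle $u_1u_2u_3$ such that $d_G(u_1)=2$, $d_G(u_2)=3$ and $N_G(u_2)=\{u_1,u_3,u_4\}$. Let $D$ be an orientation of $G$ in which the edges incident with $u_1$ or $u_2$ are oriented as the arcs $(u_1,u_3)$, $(u_2,u_1)$, $(u_2,u_3)$, $(u_4,u_2)$, and let $D'=D-\{u_1,u_2\}$. Then $\mathrm{diff}(D)=\mathrm{diff}(D')$. In particular, $D$ is an AT-orientation if and only if $D'$ is an AT-orientation.
   Context: For an orientation $D$ of a graph, an Eulerian sub-digraph of $D$ is a spanning sub-digraph $F$ of $D$ with $d^+_F(v)=d^-_F(v)$ for every vertex $v$; $\mathrm{diff}(D)$ is the number of Eulerian sub-digraphs of $D$ with an even number of arcs minus the number with an odd number of arcs; $D$ is an AT-orientation if $\mathrm{diff}(D)\ne 0$. *)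

theory Defs
  imports Main
begin

text \<open>A finite simple graph: vertex set V, edge relation E given as a symmetric,
  irreflexive set of ordered pairs (each undirected edge xy appears as (x,y) and (y,x)).\<close>
definition simple_graph :: "'a set \<Rightarrow> ('a \<times> 'a) set \<Rightarrow> bool" where
  "simple_graph V E \<longleftrightarrow> finite V \<and> E \<subseteq> V \<times> V \<and> sym E \<and> irrefl E"

definition nbhd :: "('a \<times> 'a) set \<Rightarrow> 'a \<Rightarrow> 'a set" where
  "nbhd E v = {w. (v, w) \<in> E}"

definition degree :: "('a \<times> 'a) set \<Rightarrow> 'a \<Rightarrow> nat" where
  "degree E v = card (nbhd E v)"

definition is_orientation :: "('a \<times> 'a) set \<Rightarrow> ('a \<times> 'a) set \<Rightarrow> bool" where
  "is_orientation E A \<longleftrightarrow> A \<subseteq> E \<and> (\<forall>(x, y) \<in> E. (x, y) \<in> A \<longleftrightarrow> (y, x) \<notin> A)"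

definition outdeg :: "('a \<times> 'a) set \<Rightarrow> 'a \<Rightarrow> nat" where
  "outdeg F v = card {w. (v, w) \<in> F}"

definition indeg :: "('a \<times> 'a) set \<Rightarrow> 'a \<Rightarrow> nat" where
  "indeg F v = card {w. (w, v) \<in> F}"

text \<open>Eulerian (spanning) sub-digraph of the digraph (V,A), identified with its arc set F.\<close>
definition eulerian_sub :: "'a set \<Rightarrow> ('a \<times> 'a) set \<Rightarrow> ('a \<times> 'a) set \<Rightarrow> bool" where
  "eulerian_sub V A F \<longleftrightarrow> F \<subseteq> A \<and> (\<forall>v \<in> V. outdeg F v = indeg F v)"

definition diff :: "'a set \<Rightarrow> ('a \<times> 'a) set \<Rightarrow> int" where
  "diff V A = int (card {F. eulerian_sub V A F \<and> even (card F)})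
            - int (card {F. eulerian_sub V A F \<and> odd (card F)})"

definition AT_orientation :: "'a set \<Rightarrow> ('a \<times> 'a) set \<Rightarrow> bool" where
  "AT_orientation V A \<longleftrightarrow> diff V A \<noteq> 0"

definition del_verts_arcs :: "('a \<times> 'a) set \<Rightarrow> 'a set \<Rightarrow> ('a \<times> 'a) set" where
  "del_verts_arcs A S = {(x, y) \<in> A. x \<notin> S \<and> y \<notin> S}"

end

theory Submission
  imports Defs
begin

locale L7 =
  fixes V :: "'a set" and E A :: "('a \<times> 'a) set" and u1 u2 u3 u4 :: 'a
  assumes sg: "simple_graph V E"
    and ori: "is_orientation E A"
    and v1: "u1 \<in> V" and v2: "u2 \<in> V" and v3: "u3 \<in> V" and v4: "u4 \<in> V"
    and d12: "u1 \<noteq> u2" and d23: "u2 \<noteq> u3" and d13: "u1 \<noteq> u3"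
    and e12: "(u1, u2) \<in> E" and e23: "(u2, u3) \<in> E" and e13: "(u1, u3) \<in> E"
    and deg1: "degree E u1 = 2" and deg2: "degree E u2 = 3"
    and nb2: "nbhd E u2 = {u1, u3, u4}"
    and a13: "(u1, u3) \<in> A" and a21: "(u2, u1) \<in> A" and a23: "(u2, u3) \<in> A" and a42: "(u4, u2) \<in> A"
begin

abbreviation "A' \<equiv> del_verts_arcs A {u1, u2}"
abbreviation "V' \<equiv> V - {u1, u2}"
abbreviation "X \<equiv> {(u1, u3), (u2, u1), (u2, u3), (u4, u2)}"
abbreviation "P1 \<equiv> {(u4, u2), (u2, u1), (u1, u3)}"
abbreviation "P2 \<equiv> {(u4, u2), (u2, u3)}"

lemma finV: "finite V" and EV: "E \<subseteq> V \<times> V" and symE: "sym E" and irrE: "irrefl E"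
  using sg by (auto simp: simple_graph_def)

lemma AE: "A \<subseteq> E" using ori by (simp add: is_orientation_def)

lemma notrev: "(x, y) \<in> A \<Longrightarrow> (y, x) \<notin> A"
  using ori AE unfolding is_orientation_def by blast

lemma finA: "finite A"
  using AE EV finV by (meson finite_SigmaI finite_subset)

lemma nb1: "nbhd E u1 = {u2, u3}"
proof -
  have fin: "finite (nbhd E u1)"
    using EV finV unfolding nbhd_def by (metis (no_types, lifting) SigmaE finite_subset mem_Collect_eq prod.inject subsetI subset_iff)
  have sub: "{u2, u3} \<subseteq> nbhd E u1" using e12 e13 by (simp add: nbhd_def)
  have "card {u2, u3} = 2" using d23 by simp
  then show ?thesis using card_subset_eq[OF fin sub] deg1 by (simp add: degree_def)
qed

lemma u4d: "u4 \<noteq> u1" "u4 \<noteq> u3" "u4 \<noteq> u2"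
proof -
  show "u4 \<noteq> u1" using deg2 nb2 d13 by (auto simp: degree_def card_insert_if)
  show "u4 \<noteq> u3" using deg2 nb2 d13 by (auto simp: degree_def card_insert_if)
  have "(u2, u4) \<in> E" using nb2 by (auto simp: nbhd_def)
  then show "u4 \<noteq> u2" using irrE by (auto simp: irrefl_def)
qed

lemma arcsX: assumes "(x, y) \<in> A" "x \<in> {u1, u2} \<or> y \<in> {u1, u2}" shows "(x, y) \<in> X"
proof -
  have xy: "(x, y) \<in> E" "(y, x) \<in> E" using assms(1) AE symE by (auto simp: sym_def)
  have n1: "\<And>w. (u1, w) \<in> E \<Longrightarrow> w = u2 \<or> w = u3" using nb1 by (auto simp: nbhd_def)
  have n2: "\<And>w. (u2, w) \<in> E \<Longrightarrow> w = u1 \<or> w = u3 \<or> w = u4" using nb2 by (auto simp: nbhd_def)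
  show ?thesis
    using assms xy n1[of x] n1[of y] n2[of x] n2[of y] notrev a13 a21 a23 a42 by blast
qed

lemma A_split: "A = A' \<union> X" and disjAX: "A' \<inter> X = {}"
  using arcsX a13 a21 a23 a42 d12 d13 d23 u4d unfolding del_verts_arcs_def by auto


lemma finF: "F \<subseteq> A \<Longrightarrow> finite F" using finA finite_subset by blast

lemma finS: "finite F \<Longrightarrow> finite {w. (v, w) \<in> F}" "finite F \<Longrightarrow> finite {w. (w, v) \<in> F}"
proof -
  assume f: "finite F"
  have "{w. (v, w) \<in> F} = snd ` (F \<inter> {p. fst p = v})" by force
  then show "finite {w. (v, w) \<in> F}" using f by simp
  have "{w. (w, v) \<in> F} = fst ` (F \<inter> {p. snd p = v})" by force
  then show "finite {w. (w, v) \<in> F}" using f by simp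
qed

lemma arcs_at:
  "(u1, y) \<in> A \<Longrightarrow> y = u3" "(x, u1) \<in> A \<Longrightarrow> x = u2"
  "(u2, y) \<in> A \<Longrightarrow> y = u1 \<or> y = u3" "(x, u2) \<in> A \<Longrightarrow> x = u4"
  using arcsX[of u1 y] arcsX[of x u1] arcsX[of u2 y] arcsX[of x u2] d12 d13 d23 u4d by auto

lemma out_u1: assumes "F \<subseteq> A" shows "outdeg F u1 = (if (u1, u3) \<in> F then 1 else 0)"
proof -
  have "{w. (u1, w) \<in> F} = (if (u1, u3) \<in> F then {u3} else {})"
    using assms arcs_at(1) by auto
  then show ?thesis by (simp add: outdeg_def)
qed

lemma in_u1: assumes "F \<subseteq> A" shows "indeg F u1 = (if (u2, u1) \<in> F then 1 else 0)"
proof -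
  have "{w. (w, u1) \<in> F} = (if (u2, u1) \<in> F then {u2} else {})"
    using assms arcs_at(2) by auto
  then show ?thesis by (simp add: indeg_def)
qed

lemma in_u2: assumes "F \<subseteq> A" shows "indeg F u2 = (if (u4, u2) \<in> F then 1 else 0)"
proof -
  have "{w. (w, u2) \<in> F} = (if (u4, u2) \<in> F then {u4} else {})"
    using assms arcs_at(4) by auto
  then show ?thesis by (simp add: indeg_def)
qed

lemma two_if: "{w. w \<in> {a, b} \<and> P w} = (if P a then {a} else {}) \<union> (if P b then {b} else {})"
  by auto

lemma out_u2: assumes "F \<subseteq> A"
  shows "outdeg F u2 = (if (u2, u1) \<in> F then 1 else 0) + (if (u2, u3) \<in> F then 1 else 0)"
proof -
  have "{w. (u2, w) \<in> F} = {w. w \<in> {u1, u3} \<and> (u2, w) \<in> F}"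
    using assms arcs_at(3) by blast
  also have "\<dots> = (if (u2, u1) \<in> F then {u1} else {}) \<union> (if (u2, u3) \<in> F then {u3} else {})"
    by (rule two_if)
  finally show ?thesis using d13 by (cases "(u2, u1) \<in> F"; cases "(u2, u3) \<in> F") (simp_all add: outdeg_def)
qed

lemma card_single_if: "card {w. w = a \<and> Q} = (if Q then 1 else 0)"
  by (cases Q) auto

lemma out_V': assumes "F \<subseteq> A" "v \<in> V'"
  shows "outdeg F v = outdeg (F \<inter> A') v + (if v = u4 \<and> (u4, u2) \<in> F then 1 else 0)"
proof -
  let ?S = "{w. (v, w) \<in> F \<inter> A'}" and ?T = "{w. w = u2 \<and> (v = u4 \<and> (u4, u2) \<in> F)}"
  have eq: "{w. (v, w) \<in> F} = ?S \<union> ?T"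
  proof (rule set_eqI)
    fix w
    show "w \<in> {w. (v, w) \<in> F} \<longleftrightarrow> w \<in> ?S \<union> ?T"
    proof
      assume h: "w \<in> {w. (v, w) \<in> F}"
      then have hA: "(v, w) \<in> A" using assms(1) by auto
      show "w \<in> ?S \<union> ?T"
      proof (cases "(v, w) \<in> A'")
        case True then show ?thesis using h by simp
      next
        case False
        then have "w = u1 \<or> w = u2" using hA assms(2) by (auto simp: del_verts_arcs_def)
        then show ?thesis
        proof
          assume "w = u1" then have "v = u2" using hA arcs_at(2) by simp
          then show ?thesis using assms(2) by simp
        next
          assume w2: "w = u2" then have "v = u4" using hA arcs_at(4) by simp
          then show ?thesis using h w2 by simp
        qed
      qed
    next
      assume "w \<in> ?S \<union> ?T" then show "w \<in> {w. (v, w) \<in> F}" by auto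
    qed
  qed
  have "finite (F \<inter> A')" using finF[OF assms(1)] by simp
  then have f: "finite ?S" by (rule finS(1))
  have d: "?S \<inter> ?T = {}" by (auto simp: del_verts_arcs_def)
  have "card (?S \<union> ?T) = card ?S + card ?T"
    using f d by (intro card_Un_disjoint) auto
  then show ?thesis unfolding outdeg_def eq card_single_if .
qed

lemma in_V': assumes "F \<subseteq> A" "v \<in> V'"
  shows "indeg F v = indeg (F \<inter> A') v + (if v = u3 \<and> (u1, u3) \<in> F then 1 else 0)
     + (if v = u3 \<and> (u2, u3) \<in> F then 1 else 0)"
proof -
  let ?S = "{w. (w, v) \<in> F \<inter> A'}" and ?T1 = "{w. w = u1 \<and> (v = u3 \<and> (u1, u3) \<in> F)}"
    and ?T2 = "{w. w = u2 \<and> (v = u3 \<and> (u2, u3) \<in> F)}"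
  have eq: "{w. (w, v) \<in> F} = (?S \<union> ?T1) \<union> ?T2"
  proof (rule set_eqI)
    fix w
    show "w \<in> {w. (w, v) \<in> F} \<longleftrightarrow> w \<in> (?S \<union> ?T1) \<union> ?T2"
    proof
      assume h: "w \<in> {w. (w, v) \<in> F}"
      then have hA: "(w, v) \<in> A" using assms(1) by auto
      show "w \<in> (?S \<union> ?T1) \<union> ?T2"
      proof (cases "(w, v) \<in> A'")
        case True then show ?thesis using h by simp
      next
        case False
        then have "w = u1 \<or> w = u2" using hA assms(2) by (auto simp: del_verts_arcs_def)
        then show ?thesis
        proof
          assume w1: "w = u1" then have "v = u3" using hA arcs_at(1) by simp
          then show ?thesis using h w1 by simp
        next
          assume w2: "w = u2" then have "v = u1 \<or> v = u3" using hA arcs_at(3) by simp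
          then have "v = u3" using assms(2) by auto
          then show ?thesis using h w2 by simp
        qed
      qed
    next
      assume "w \<in> (?S \<union> ?T1) \<union> ?T2" then show "w \<in> {w. (w, v) \<in> F}" by auto
    qed
  qed
  have "finite (F \<inter> A')" using finF[OF assms(1)] by simp
  then have f: "finite ?S" by (rule finS(2))
  have d1: "?S \<inter> ?T1 = {}" by (auto simp: del_verts_arcs_def)
  have d2: "(?S \<union> ?T1) \<inter> ?T2 = {}" using d12 by (auto simp: del_verts_arcs_def)
  have "card ((?S \<union> ?T1) \<union> ?T2) = card (?S \<union> ?T1) + card ?T2"
    using f d2 by (intro card_Un_disjoint) auto
  also have "card (?S \<union> ?T1) = card ?S + card ?T1"
    using f d1 by (intro card_Un_disjoint) auto
  finally show ?thesis unfolding indeg_def eq card_single_if .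
qed

definition condb :: "bool \<Rightarrow> ('a \<times> 'a) set \<Rightarrow> bool" where
  "condb b F \<longleftrightarrow> (\<forall>v\<in>V'. outdeg F v + (if v = u4 \<and> b then 1 else 0) = indeg F v + (if v = u3 \<and> b then 1 else 0))"

lemma eul': "eulerian_sub V' A' F \<longleftrightarrow> F \<subseteq> A' \<and> condb False F"
  by (simp add: eulerian_sub_def condb_def)


lemma nA': "(u1, u3) \<notin> A'" "(u2, u1) \<notin> A'" "(u2, u3) \<notin> A'" "(u4, u2) \<notin> A'"
  by (auto simp: del_verts_arcs_def)

lemma A'A: "A' \<subseteq> A" by (auto simp: del_verts_arcs_def)

lemmas dist = d12 d23 d13 u4d d12[symmetric] d23[symmetric] d13[symmetric] u4d[symmetric]

lemma char_fwd:
  assumes eu: "eulerian_sub V A F"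
  shows "(F \<subseteq> A' \<and> condb False F) \<or> (\<exists>F'. F' \<subseteq> A' \<and> condb True F' \<and> (F = F' \<union> P1 \<or> F = F' \<union> P2))"
proof -
  have FA: "F \<subseteq> A" and bal: "\<And>v. v \<in> V \<Longrightarrow> outdeg F v = indeg F v"
    using eu by (auto simp: eulerian_sub_def)
  have h1: "(u1, u3) \<in> F \<longleftrightarrow> (u2, u1) \<in> F"
  proof -
    have "(if (u1, u3) \<in> F then 1 else 0) = (if (u2, u1) \<in> F then 1 else (0::nat))"
      using bal[OF v1] unfolding out_u1[OF FA] in_u1[OF FA] .
    then show ?thesis by (cases "(u1, u3) \<in> F"; cases "(u2, u1) \<in> F") simp_all
  qed
  have h2: "(if (u2, u1) \<in> F then 1 else 0) + (if (u2, u3) \<in> F then 1 else 0) = (if (u4, u2) \<in> F then 1 else (0::nat))"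
    using bal[OF v2] unfolding out_u2[OF FA] in_u2[OF FA] .
  have hV: "outdeg (F \<inter> A') v + (if v = u4 \<and> (u4, u2) \<in> F then 1 else 0)
     = indeg (F \<inter> A') v + (if v = u3 \<and> (u1, u3) \<in> F then 1 else 0) + (if v = u3 \<and> (u2, u3) \<in> F then 1 else 0)"
    if vV: "v \<in> V'" for v
  proof -
    have "v \<in> V" using vV by blast
    then have "outdeg F v = indeg F v" by (rule bal)
    then show ?thesis unfolding out_V'[OF FA vV] in_V'[OF FA vV] .
  qed
  have Fsplit: "F = (F \<inter> A') \<union> (F \<inter> X)" using FA A_split by blast
  have sub: "F \<inter> A' \<subseteq> A'" by simp
  consider (N) "(u4, u2) \<notin> F" "(u2, u1) \<notin> F" "(u2, u3) \<notin> F" "(u1, u3) \<notin> F"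
    | (Q1) "(u4, u2) \<in> F" "(u2, u1) \<in> F" "(u2, u3) \<notin> F" "(u1, u3) \<in> F"
    | (Q2) "(u4, u2) \<in> F" "(u2, u1) \<notin> F" "(u2, u3) \<in> F" "(u1, u3) \<notin> F"
  proof -
    have "\<not> ((u2, u1) \<in> F \<and> (u2, u3) \<in> F)" using h2 by (cases "(u4, u2) \<in> F") auto
    moreover have "(u4, u2) \<in> F \<longleftrightarrow> (u2, u1) \<in> F \<or> (u2, u3) \<in> F"
      using h2 by (cases "(u4, u2) \<in> F"; cases "(u2, u1) \<in> F"; cases "(u2, u3) \<in> F") simp_all
    ultimately show ?thesis using that h1 by blast
  qed
  then show ?thesis
  proof cases
    case N
    then have "F \<inter> X = {}" by blast
    then have FF: "F \<inter> A' = F" using Fsplit by blast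
    have "condb False F" unfolding condb_def
    proof
      fix v assume vV: "v \<in> V'"
      show "outdeg F v + (if v = u4 \<and> False then 1 else 0) = indeg F v + (if v = u3 \<and> False then 1 else 0)"
        using hV[OF vV] unfolding FF using N by simp
    qed
    then show ?thesis using FF sub by auto
  next
    case Q1
    have c: "condb True (F \<inter> A')" unfolding condb_def
    proof
      fix v assume vV: "v \<in> V'"
      show "outdeg (F \<inter> A') v + (if v = u4 \<and> True then 1 else 0) = indeg (F \<inter> A') v + (if v = u3 \<and> True then 1 else 0)"
        using hV[OF vV] Q1 by simp
    qed
    have "F \<inter> X = P1" using Q1 dist by blast
    then have "F = (F \<inter> A') \<union> P1" using Fsplit by (simp only:)
    then show ?thesis using c sub by blast
  next
    case Q2
    have c: "condb True (F \<inter> A')" unfolding condb_def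
    proof
      fix v assume vV: "v \<in> V'"
      show "outdeg (F \<inter> A') v + (if v = u4 \<and> True then 1 else 0) = indeg (F \<inter> A') v + (if v = u3 \<and> True then 1 else 0)"
        using hV[OF vV] Q2 by simp
    qed
    have "F \<inter> X = P2" using Q2 dist by blast
    then have "F = (F \<inter> A') \<union> P2" using Fsplit by (simp only:)
    then show ?thesis using c sub by blast
  qed
qed

lemma char_bwd1:
  assumes "F \<subseteq> A'" "condb False F" shows "eulerian_sub V A F"
proof -
  have FA: "F \<subseteq> A" using assms(1) A'A by blast
  have FF: "F \<inter> A' = F" using assms(1) by blast
  have n: "(u2, u1) \<notin> F" "(u2, u3) \<notin> F" "(u1, u3) \<notin> F" "(u4, u2) \<notin> F" using assms(1) nA' by auto
  have "outdeg F v = indeg F v" if vV0: "v \<in> V" for v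
  proof -
    consider "v = u1" | "v = u2" | "v \<in> V'" using vV0 by blast
    then show ?thesis
    proof cases
      case 1 then show ?thesis unfolding 1 out_u1[OF FA] in_u1[OF FA] using n by simp
    next
      case 2 then show ?thesis unfolding 2 out_u2[OF FA] in_u2[OF FA] using n by simp
    next
      case 3
      have "outdeg F v = indeg F v" using assms(2) 3 unfolding condb_def by simp
      then show ?thesis .
    qed
  qed
  then show ?thesis using FA by (simp add: eulerian_sub_def)
qed

lemma char_bwd2:
  assumes FA: "F \<subseteq> A" and FF: "F \<inter> A' = F'" and cb: "condb True F'" and m42: "(u4, u2) \<in> F"
    and Q: "((u2, u1) \<in> F \<and> (u2, u3) \<notin> F \<and> (u1, u3) \<in> F) \<or> ((u2, u1) \<notin> F \<and> (u2, u3) \<in> F \<and> (u1, u3) \<notin> F)"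
  shows "eulerian_sub V A F"
proof -
  have "outdeg F v = indeg F v" if vV0: "v \<in> V" for v
  proof -
    consider "v = u1" | "v = u2" | "v \<in> V'" using vV0 by blast
    then show ?thesis
    proof cases
      case 1
      have "(if (u1, u3) \<in> F then 1 else 0) = (if (u2, u1) \<in> F then 1 else (0::nat))"
        using Q by (cases "(u2, u1) \<in> F") simp_all
      then show ?thesis unfolding 1 out_u1[OF FA] in_u1[OF FA] .
    next
      case 2
      have "(if (u2, u1) \<in> F then 1 else 0) + (if (u2, u3) \<in> F then 1 else 0) = (if (u4, u2) \<in> F then 1 else (0::nat))"
        using Q m42 by (cases "(u2, u1) \<in> F") simp_all
      then show ?thesis unfolding 2 out_u2[OF FA] in_u2[OF FA] .
    next
      case 3
      have e: "outdeg F' v + (if v = u4 then 1 else 0) = indeg F' v + (if v = u3 then 1 else 0)"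
        using cb 3 unfolding condb_def by simp
      have "outdeg F' v + (if v = u4 \<and> (u4, u2) \<in> F then 1 else 0)
         = indeg F' v + (if v = u3 \<and> (u1, u3) \<in> F then 1 else 0) + (if v = u3 \<and> (u2, u3) \<in> F then 1 else 0)"
        using e Q m42 by (cases "(u2, u1) \<in> F") simp_all
      then show ?thesis unfolding out_V'[OF FA 3] in_V'[OF FA 3] FF .
    qed
  qed
  then show ?thesis using FA by (simp add: eulerian_sub_def)
qed

lemma P1mem: "(u4, u2) \<in> F' \<union> P1" "(u2, u1) \<in> F' \<union> P1" "(u1, u3) \<in> F' \<union> P1"
  "(u4, u2) \<in> F' \<union> P2" "(u2, u3) \<in> F' \<union> P2" by auto

lemma P1nmem: "F' \<subseteq> A' \<Longrightarrow> (u2, u3) \<notin> F' \<union> P1" "F' \<subseteq> A' \<Longrightarrow> (u2, u1) \<notin> F' \<union> P2"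
  "F' \<subseteq> A' \<Longrightarrow> (u1, u3) \<notin> F' \<union> P2"
  using nA' dist by auto

lemma char:
  "eulerian_sub V A F \<longleftrightarrow> (F \<subseteq> A' \<and> condb False F) \<or> (\<exists>F'. F' \<subseteq> A' \<and> condb True F' \<and> (F = F' \<union> P1 \<or> F = F' \<union> P2))"
proof
  assume "eulerian_sub V A F" then show "(F \<subseteq> A' \<and> condb False F) \<or> (\<exists>F'. F' \<subseteq> A' \<and> condb True F' \<and> (F = F' \<union> P1 \<or> F = F' \<union> P2))"
    by (rule char_fwd)
next
  assume "(F \<subseteq> A' \<and> condb False F) \<or> (\<exists>F'. F' \<subseteq> A' \<and> condb True F' \<and> (F = F' \<union> P1 \<or> F = F' \<union> P2))"
  then show "eulerian_sub V A F"
  proof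
    assume "F \<subseteq> A' \<and> condb False F" then show ?thesis using char_bwd1 by blast
  next
    assume "\<exists>F'. F' \<subseteq> A' \<and> condb True F' \<and> (F = F' \<union> P1 \<or> F = F' \<union> P2)"
    then obtain F' where F': "F' \<subseteq> A'" "condb True F'" "F = F' \<union> P1 \<or> F = F' \<union> P2" by blast
    have FA: "F \<subseteq> A" using F'(1,3) A'A a13 a21 a23 a42 by blast
    have FF: "F \<inter> A' = F'" using F'(1,3) nA' by blast
    show ?thesis
    proof (rule char_bwd2[OF FA FF F'(2)])
      show "(u4, u2) \<in> F" using F'(3) by blast
      show "((u2, u1) \<in> F \<and> (u2, u3) \<notin> F \<and> (u1, u3) \<in> F) \<or> ((u2, u1) \<notin> F \<and> (u2, u3) \<in> F \<and> (u1, u3) \<notin> F)"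
        using F'(3) P1mem P1nmem[OF F'(1)] by blast
    qed
  qed
qed


lemma P1A': "P1 \<inter> A' = {}" "P2 \<inter> A' = {}" using nA' by auto

lemma cardP: "card P1 = 3" "card P2 = 2"
proof -
  have a: "(u4, u2) \<notin> {(u2, u1), (u1, u3)}" using u4d(1,3) by blast
  have b: "(u2, u1) \<notin> {(u1, u3)}" using d12 by blast
  have c: "(u4, u2) \<notin> {(u2, u3)}" using u4d(3) by blast
  have "card {(u2, u1), (u1, u3)} = 2" using card_insert_disjoint[OF _ b] by simp
  then show "card P1 = 3" using card_insert_disjoint[OF _ a] by simp
  show "card P2 = 2" using card_insert_disjoint[OF _ c] by simp
qed

lemma finA': "F \<subseteq> A' \<Longrightarrow> finite F"
  by (rule finite_subset[OF _ finA]) (use A'A in blast)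

lemma card_P1: "F \<subseteq> A' \<Longrightarrow> card (F \<union> P1) = card F + 3"
proof -
  assume h: "F \<subseteq> A'"
  have "F \<inter> P1 = {}" using h P1A'(1) by blast
  then show ?thesis using card_Un_disjoint[of F P1] finA'[OF h] cardP(1) by simp
qed

lemma card_P2: "F \<subseteq> A' \<Longrightarrow> card (F \<union> P2) = card F + 2"
proof -
  assume h: "F \<subseteq> A'"
  have "F \<inter> P2 = {}" using h P1A'(2) by blast
  then show ?thesis using card_Un_disjoint[of F P2] finA'[OF h] cardP(2) by simp
qed

lemma inj1: "inj_on (\<lambda>F. F \<union> P1) {F. F \<subseteq> A' \<and> condb True F}"
proof (rule inj_onI)
  fix F G assume "F \<in> {F. F \<subseteq> A' \<and> condb True F}" "G \<in> {F. F \<subseteq> A' \<and> condb True F}" "F \<union> P1 = G \<union> P1"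
  then have "(F \<union> P1) \<inter> A' = F" "(G \<union> P1) \<inter> A' = G" "F \<union> P1 = G \<union> P1" using P1A' by blast+
  then show "F = G" by metis
qed

lemma inj2: "inj_on (\<lambda>F. F \<union> P2) {F. F \<subseteq> A' \<and> condb True F}"
proof (rule inj_onI)
  fix F G assume "F \<in> {F. F \<subseteq> A' \<and> condb True F}" "G \<in> {F. F \<subseteq> A' \<and> condb True F}" "F \<union> P2 = G \<union> P2"
  then have "(F \<union> P2) \<inter> A' = F" "(G \<union> P2) \<inter> A' = G" "F \<union> P2 = G \<union> P2" using P1A' by blast+
  then show "F = G" by metis
qed

lemma Eul_eq: "{F. eulerian_sub V A F} = ({F. F \<subseteq> A' \<and> condb False F} \<union> (\<lambda>F. F \<union> P1) ` {F. F \<subseteq> A' \<and> condb True F})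
   \<union> (\<lambda>F. F \<union> P2) ` {F. F \<subseteq> A' \<and> condb True F}"
proof (rule set_eqI)
  fix F
  show "F \<in> {F. eulerian_sub V A F} \<longleftrightarrow> F \<in> ({F. F \<subseteq> A' \<and> condb False F} \<union> (\<lambda>F. F \<union> P1) ` {F. F \<subseteq> A' \<and> condb True F})
   \<union> (\<lambda>F. F \<union> P2) ` {F. F \<subseteq> A' \<and> condb True F}"
    unfolding mem_Collect_eq char Un_iff image_iff Bex_def by blast
qed

lemma Eul'_eq: "{F. eulerian_sub V' A' F} = {F. F \<subseteq> A' \<and> condb False F}"
  by (simp add: eul')

lemma sum_eq: "(\<Sum>F\<in>{F. eulerian_sub V A F}. (-1::int) ^ card F) = (\<Sum>F\<in>{F. eulerian_sub V' A' F}. (-1::int) ^ card F)"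
proof -
  let ?S = "{F. F \<subseteq> A' \<and> condb False F}" and ?T = "{F. F \<subseteq> A' \<and> condb True F}"
  have fPA: "finite (Pow A')" using finA'[of A'] by simp
  have fT: "finite ?T" by (rule finite_subset[OF _ fPA]) blast
  have fS: "finite ?S" by (rule finite_subset[OF _ fPA]) blast
  have i1: "(u4, u2) \<in> G \<and> (u2, u1) \<in> G" if hG: "G \<in> (\<lambda>F. F \<union> P1) ` ?T" for G
  proof -
    from hG obtain F where "G = F \<union> P1" by (rule imageE)
    then show ?thesis by simp
  qed
  have i2: "(u4, u2) \<in> G \<and> (u2, u1) \<notin> G" if hG: "G \<in> (\<lambda>F. F \<union> P2) ` ?T" for G
  proof -
    from hG obtain F where G: "G = F \<union> P2" and F: "F \<in> ?T" by (rule imageE)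
    from F have "F \<subseteq> A'" by simp
    then have "(u2, u1) \<notin> F \<union> P2" by (rule P1nmem(2))
    then show ?thesis using G by simp
  qed
  have i0: "(u4, u2) \<notin> G" if hG: "G \<in> ?S" for G
  proof -
    from hG have "G \<subseteq> A'" by simp
    then show ?thesis using nA'(4) by blast
  qed
  have d1: "?S \<inter> (\<lambda>F. F \<union> P1) ` ?T = {}"
  proof (rule equals0I)
    fix G assume "G \<in> ?S \<inter> (\<lambda>F. F \<union> P1) ` ?T"
    then have a: "G \<in> ?S" and b: "G \<in> (\<lambda>F. F \<union> P1) ` ?T" by (rule IntD1, rule IntD2)
    show False using i0[OF a] i1[OF b] by simp
  qed
  have d2: "(?S \<union> (\<lambda>F. F \<union> P1) ` ?T) \<inter> (\<lambda>F. F \<union> P2) ` ?T = {}"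
  proof (rule equals0I)
    fix G assume "G \<in> (?S \<union> (\<lambda>F. F \<union> P1) ` ?T) \<inter> (\<lambda>F. F \<union> P2) ` ?T"
    then have a: "G \<in> ?S \<union> (\<lambda>F. F \<union> P1) ` ?T" and b: "G \<in> (\<lambda>F. F \<union> P2) ` ?T" by (rule IntD1, rule IntD2)
    from a show False
    proof (rule UnE)
      assume c: "G \<in> ?S" show False using i0[OF c] i2[OF b] by simp
    next
      assume c: "G \<in> (\<lambda>F. F \<union> P1) ` ?T" show False using i1[OF c] i2[OF b] by simp
    qed
  qed
  let ?I1 = "(\<lambda>F. F \<union> P1) ` ?T" and ?I2 = "(\<lambda>F. F \<union> P2) ` ?T"
  let ?g = "\<lambda>F. (-1::int) ^ card F"
  have fI1: "finite ?I1" using fT by (rule finite_imageI)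
  have fI2: "finite ?I2" using fT by (rule finite_imageI)
  have fSI: "finite (?S \<union> ?I1)" using fS fI1 by (rule finite_UnI)
  have s1: "sum ?g ((?S \<union> ?I1) \<union> ?I2) = sum ?g (?S \<union> ?I1) + sum ?g ?I2"
    by (rule sum.union_disjoint[OF fSI fI2 d2])
  have s2: "sum ?g (?S \<union> ?I1) = sum ?g ?S + sum ?g ?I1"
    by (rule sum.union_disjoint[OF fS fI1 d1])
  have r1: "sum ?g ?I1 = sum (?g \<circ> (\<lambda>F. F \<union> P1)) ?T" by (rule sum.reindex[OF inj1])
  also have "\<dots> = sum (\<lambda>F. - ?g F) ?T"
  proof (rule sum.cong)
    fix F assume "F \<in> ?T"
    then have "F \<subseteq> A'" by blast
    then have c: "card (F \<union> P1) = card F + 3" by (rule card_P1)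
    show "(?g \<circ> (\<lambda>F. F \<union> P1)) F = - ?g F" unfolding comp_def c by (simp add: power_add)
  qed simp
  finally have r1': "sum ?g ?I1 = - sum ?g ?T" by (simp add: sum_negf)
  have r2: "sum ?g ?I2 = sum (?g \<circ> (\<lambda>F. F \<union> P2)) ?T" by (rule sum.reindex[OF inj2])
  also have "\<dots> = sum ?g ?T"
  proof (rule sum.cong)
    fix F assume "F \<in> ?T"
    then have "F \<subseteq> A'" by blast
    then have c: "card (F \<union> P2) = card F + 2" by (rule card_P2)
    show "(?g \<circ> (\<lambda>F. F \<union> P2)) F = ?g F" unfolding comp_def c by (simp add: power_add)
  qed simp
  finally have r2': "sum ?g ?I2 = sum ?g ?T" .
  have "sum ?g {F. eulerian_sub V A F} = sum ?g ?S"
    unfolding Eul_eq s1 s2 r1' r2' by simp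
  then show ?thesis unfolding Eul'_eq .
qed

end

lemma sgn_count:
  assumes "finite S"
  shows "int (card {F \<in> S. even (card F)}) - int (card {F \<in> S. odd (card F)}) = (\<Sum>F\<in>S. (-1::int) ^ card F)"
proof -
  have "(\<Sum>F\<in>S. (-1::int) ^ card F) = (\<Sum>F\<in>S. if even (card F) then 1 else -1)"
    by (rule sum.cong) auto
  also have "\<dots> = (\<Sum>F\<in>S \<inter> {F. even (card F)}. 1) + (\<Sum>F\<in>S \<inter> - {F. even (card F)}. -1)"
    by (rule sum.If_cases[OF assms])
  also have "S \<inter> {F. even (card F)} = {F \<in> S. even (card F)}" by auto
  also have "S \<inter> - {F. even (card F)} = {F \<in> S. odd (card F)}" by auto
  finally show ?thesis by simp
qed

lemma diff_sum:
  assumes "finite A"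
  shows "diff V A = (\<Sum>F\<in>{F. eulerian_sub V A F}. (-1::int) ^ card F)"
proof -
  have f: "finite {F. eulerian_sub V A F}"
    by (rule finite_subset[of _ "Pow A"]) (use assms in \<open>auto simp: eulerian_sub_def\<close>)
  show ?thesis unfolding diff_def sgn_count[OF f, symmetric] by simp
qed

theorem mainTheorem7:
  fixes V :: "'a set" and E A :: "('a \<times> 'a) set" and u1 u2 u3 u4 :: 'a
  assumes "simple_graph V E"
    and "is_orientation E A"
    and "u1 \<in> V" "u2 \<in> V" "u3 \<in> V" "u4 \<in> V"
    and "u1 \<noteq> u2" "u2 \<noteq> u3" "u1 \<noteq> u3"
    and "(u1, u2) \<in> E" "(u2, u3) \<in> E" "(u1, u3) \<in> E"
    and "degree E u1 = 2" "degree E u2 = 3"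
    and "nbhd E u2 = {u1, u3, u4}"
    and "(u1, u3) \<in> A" "(u2, u1) \<in> A" "(u2, u3) \<in> A" "(u4, u2) \<in> A"
  shows "diff V A = diff (V - {u1, u2}) (del_verts_arcs A {u1, u2})
         \<and> (AT_orientation V A \<longleftrightarrow> AT_orientation (V - {u1, u2}) (del_verts_arcs A {u1, u2}))"
proof -
  interpret L: L7 V E A u1 u2 u3 u4
    by (unfold_locales; fact assms)
  have fA': "finite (del_verts_arcs A {u1, u2})" using L.finA'[of "del_verts_arcs A {u1, u2}"] by simp
  have "diff V A = diff (V - {u1, u2}) (del_verts_arcs A {u1, u2})"
    unfolding diff_sum[OF L.finA] diff_sum[OF fA'] by (rule L.sum_eq)
  then show ?thesis by (simp add: AT_orientation_def)
qed

end
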